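(* Let $X$ be a nontrivial real Banach space. The following assertions are equivalent: (i) $X^*$ has the weak$^*$ diameter $2$ property; (ii) $X$ is weakly octahedral; (iii) for every finite-dimensional subspace $E$ of $X$, every $x^*\in B_{X^*}$, every $\varepsilon>0$, and every $\varepsilon_0\in(0,\varepsilon)$, there is a $y\in S_X$ such that, whenever $|\gamma|\leq 1+\varepsilon_0$, there is a $y^*\in X^*$ satisfying $y^*|_E=x^*|_E$, $y^*(y)=\gamma$, and $\|y^*\|\leq 1+\varepsilon$; (iii') for every finite-dimensional subspace $E$ of $X$, every $x^*\in B_{X^*}$, and every $\varepsilon>0$, there are $y\in S_X$ and $x_1^*,x_2^*\in X^*$ satisfying $x_1^*|_E=x_2^*|_E=x^*|_E$, $x_1^*(y)-x_2^*(y)>2-\varepsilon$, and $\|x_1^*\|,\|x_2^*\|\leq 1+\varepsilon$.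
   Context: $B_Z$, $S_Z$ denote the closed unit ball and unit sphere of a Banach space $Z$. $X^*$ has the weak$^*$ diameter $2$ property if every nonempty relatively weak$^*$ open subset of $B_{X^*}$ has diameter $2$. $X$ is weakly octahedral if for every finite-dimensional subspace $E$ of $X$, every $x^*\in B_{X^*}$, and every $\varepsilon>0$, there is a $y\in S_X$ such that $\|x+y\|\geq(1-\varepsilon)(|x^*(x)|+\|y\|)$ for all $x\in E$. *)

theory Defs
  imports "HOL-Analysis.Analysis"
begin

text \<open>The dual space X* is modelled as the type of bounded linear functionals
  from X to the reals (blinfun), with the operator norm.\<close>

definition weak_star_open :: "('a::real_normed_vector \<Rightarrow>\<^sub>L real) set \<Rightarrow> bool" where
  "weak_star_open U \<longleftrightarrow>
     (\<forall>f\<in>U. \<exists>F e. finite F \<and> e > 0 \<and>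
        {g. \<forall>x\<in>F. \<bar>blinfun_apply g x - blinfun_apply f x\<bar> < e} \<subseteq> U)"

definition weak_star_diameter_two :: "'a::real_normed_vector itself \<Rightarrow> bool" where
  "weak_star_diameter_two _ \<longleftrightarrow>
     (\<forall>U::('a \<Rightarrow>\<^sub>L real) set. weak_star_open U \<longrightarrow>
        U \<inter> {f. norm f \<le> 1} \<noteq> {} \<longrightarrow> diameter (U \<inter> {f. norm f \<le> 1}) = 2)"

definition finite_dim_subspace :: "'a::real_vector set \<Rightarrow> bool" where
  "finite_dim_subspace E \<longleftrightarrow> subspace E \<and> (\<exists>F. finite F \<and> span F = E)"

definition weakly_octahedral :: "'a::real_normed_vector itself \<Rightarrow> bool" where
  "weakly_octahedral _ \<longleftrightarrow>
     (\<forall>(E::'a set) (xs::'a \<Rightarrow>\<^sub>L real) (e::real).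
        finite_dim_subspace E \<longrightarrow> norm xs \<le> 1 \<longrightarrow> e > 0 \<longrightarrow>
        (\<exists>y. norm y = 1 \<and>
           (\<forall>x\<in>E. norm (x + y) \<ge> (1 - e) * (\<bar>blinfun_apply xs x\<bar> + norm y))))"

end

theory Submission
  imports Defs
begin

lemma HB_ext:
  fixes G0 :: "('a::real_normed_vector \<times> real) set"
  assumes G0: "subspace G0" and C: "C \<ge> 0" and dom: "\<And>x a. (x,a)\<in>G0 \<Longrightarrow> a \<le> C * norm x"
  shows "\<exists>f::'a \<Rightarrow>\<^sub>L real. (\<forall>(x,a)\<in>G0. blinfun_apply f x = a) \<and> norm f \<le> C"
proof -
  define A where "A = {G. subspace G \<and> G0 \<subseteq> G \<and> (\<forall>(x,a)\<in>G. a \<le> C * norm x)}"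
  have G0A: "G0 \<in> A" using G0 dom unfolding A_def by auto
  have "\<forall>Ch\<in>chains A. \<exists>U\<in>A. \<forall>X\<in>Ch. X \<subseteq> U"
  proof
    fix Ch assume Ch: "Ch \<in> chains A"
    show "\<exists>U\<in>A. \<forall>X\<in>Ch. X \<subseteq> U"
    proof (cases "Ch = {}")
      case True then show ?thesis using G0A by auto
    next
      case False
      have sub: "Ch \<subseteq> A" using Ch chainsD2 by blast
      have "\<Union>Ch \<in> A"
        unfolding A_def
      proof (intro CollectI conjI)
        show "subspace (\<Union>Ch)"
          unfolding subspace_def
        proof (intro conjI ballI allI)
          show "0 \<in> \<Union>Ch" using False sub unfolding A_def subspace_def by blast
        next
          fix x y assume "x \<in> \<Union>Ch" "y \<in> \<Union>Ch"
          then obtain X Y where XY: "X \<in> Ch" "Y \<in> Ch" "x \<in> X" "y \<in> Y" by blast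
          then have "X \<subseteq> Y \<or> Y \<subseteq> X" using chainsD[OF Ch] by blast
          moreover have "subspace X" "subspace Y" using XY sub unfolding A_def by auto
          ultimately show "x + y \<in> \<Union>Ch" using XY unfolding subspace_def by blast
        next
          fix c x assume "x \<in> \<Union>Ch"
          then obtain X where X: "X \<in> Ch" "x \<in> X" by blast
          have "subspace X" using X sub unfolding A_def by auto
          then show "c *\<^sub>R x \<in> \<Union>Ch" using X unfolding subspace_def by blast
        qed
        show "G0 \<subseteq> \<Union>Ch" using False sub unfolding A_def by blast
        show "\<forall>(x,a)\<in>\<Union>Ch. a \<le> C * norm x" using sub unfolding A_def by blast
      qed
      then show ?thesis by blast
    qed
  qed
  from Zorn_Lemma2[OF this] obtain M where MA: "M \<in> A" and Mmax: "\<And>X. X \<in> A \<Longrightarrow> M \<subseteq> X \<Longrightarrow> X = M"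
    by blast
  have Msub: "subspace M" and G0M: "G0 \<subseteq> M" and Mdom: "\<And>x a. (x,a)\<in>M \<Longrightarrow> a \<le> C * norm x"
    using MA unfolding A_def by auto
  have Madd: "(x+y, a+b) \<in> M" if "(x,a)\<in>M" "(y,b)\<in>M" for x y a b
    using subspace_add[OF Msub that] by simp
  have Mscale: "(c *\<^sub>R x, c * a) \<in> M" if "(x,a)\<in>M" for x a c
    using subspace_scale[OF Msub that, of c] by simp
  have M0: "(0,0) \<in> M" using subspace_0[OF Msub] by (simp add: zero_prod_def)
  have uniq: "a = b" if "(x,a)\<in>M" "(x,b)\<in>M" for x a b
  proof -
    have "(x + (-1) *\<^sub>R x, a + (-1) * b) \<in> M" using Madd[OF that(1) Mscale[OF that(2)]] .
    then have "a - b \<le> 0" using Mdom by fastforce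
    moreover have "(x + (-1) *\<^sub>R x, b + (-1) * a) \<in> M" using Madd[OF that(2) Mscale[OF that(1)]] .
    then have "b - a \<le> 0" using Mdom by fastforce
    ultimately show ?thesis by simp
  qed
  have total: "\<exists>a. (y,a) \<in> M" for y
  proof (rule ccontr)
    assume ny: "\<nexists>a. (y,a) \<in> M"
    define S where "S = {a - C * norm (m - y) | m a. (m,a) \<in> M}"
    define c where "c = Sup S"
    have Sne: "S \<noteq> {}" using M0 unfolding S_def by blast
    have Sbnd: "s \<le> C * norm (m' + y) - b" if "s \<in> S" "(m',b) \<in> M" for s m' b
    proof -
      obtain m a where ma: "s = a - C * norm (m - y)" "(m,a)\<in>M" using \<open>s\<in>S\<close> unfolding S_def by blast
      have "a + b \<le> C * norm (m + m')" using Mdom[OF Madd[OF ma(2) that(2)]] .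
      also have "norm (m + m') \<le> norm (m - y) + norm (m' + y)"
        using norm_triangle_ineq[of "m - y" "m' + y"] by simp
      then have "C * norm (m + m') \<le> C * (norm (m - y) + norm (m' + y))"
        using C by (rule mult_left_mono)
      finally show ?thesis using ma by (simp add: algebra_simps)
    qed
    have bdd: "bdd_above S" using Sbnd[OF _ M0] by (metis bdd_aboveI)
    have c_up: "a - C * norm (m - y) \<le> c" if "(m,a)\<in>M" for m a
      unfolding c_def by (rule cSup_upper[OF _ bdd]) (use that S_def in blast)
    have c_lo: "c \<le> C * norm (m' + y) - b" if "(m',b)\<in>M" for m' b
      unfolding c_def by (rule cSup_least[OF Sne]) (use Sbnd that in blast)
    define M' where "M' = span (insert (y,c) M)"
    have "M' \<in> A"
      unfolding A_def
    proof (intro CollectI conjI)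
      show "subspace M'" unfolding M'_def by (rule subspace_span)
      show "G0 \<subseteq> M'" using G0M span_superset unfolding M'_def by blast
      show "\<forall>(x,a)\<in>M'. a \<le> C * norm x"
      proof (clarify)
        fix x a assume "(x,a) \<in> M'"
        then obtain k where k: "(x,a) - k *\<^sub>R (y,c) \<in> M"
          unfolding M'_def span_insert using span_eq_iff[THEN iffD2, OF Msub] by auto
        define m where "m = x - k *\<^sub>R y"
        define b where "b = a - k * c"
        have mb: "(m,b) \<in> M" using k unfolding m_def b_def by simp
        have xa: "x = m + k *\<^sub>R y" "a = b + k * c" unfolding m_def b_def by auto
        show "a \<le> C * norm x"
        proof (cases "k = 0")
          case True then show ?thesis using Mdom[OF mb] xa by simp
        next
          case False
          have mb': "((1/k) *\<^sub>R m, (1/k) * b) \<in> M" using Mscale[OF mb] .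
          show ?thesis
          proof (cases "k > 0")
            case True
            have "c \<le> C * norm ((1/k) *\<^sub>R m + y) - (1/k) * b" using c_lo[OF mb'] .
            then have "k * c \<le> k * (C * norm ((1/k) *\<^sub>R m + y) - (1/k) * b)"
              using True by (simp add: mult_left_mono)
            also have "\<dots> = C * (k * norm ((1/k) *\<^sub>R m + y)) - b"
              using True by (simp add: algebra_simps)
            also have "k * norm ((1/k) *\<^sub>R m + y) = norm (k *\<^sub>R ((1/k) *\<^sub>R m + y))"
              using True by simp
            also have "k *\<^sub>R ((1/k) *\<^sub>R m + y) = x" using True xa by (simp add: algebra_simps)
            finally show ?thesis using xa by simp
          next
            case False
            with \<open>k \<noteq> 0\<close> have kn: "k < 0" by simp
            define s where "s = - k"
            have sp: "s > 0" using kn s_def by simp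
            have mb'': "((1/s) *\<^sub>R m, (1/s) * b) \<in> M" using Mscale[OF mb] .
            have "(1/s) * b - C * norm ((1/s) *\<^sub>R m - y) \<le> c" using c_up[OF mb''] .
            then have "s * ((1/s) * b - C * norm ((1/s) *\<^sub>R m - y)) \<le> s * c"
              using sp by (simp add: mult_left_mono)
            then have "b - C * (s * norm ((1/s) *\<^sub>R m - y)) \<le> s * c"
              using sp by (simp add: algebra_simps)
            also have "s * norm ((1/s) *\<^sub>R m - y) = norm (s *\<^sub>R ((1/s) *\<^sub>R m - y))"
              using sp by simp
            also have "s *\<^sub>R ((1/s) *\<^sub>R m - y) = x" using sp xa s_def by (simp add: algebra_simps)
            finally show ?thesis using xa s_def by simp
          qed
        qed
      qed
    qed
    moreover have "M \<subseteq> M'" unfolding M'_def using span_superset by blast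
    ultimately have "M' = M" using Mmax by blast
    moreover have "(y,c) \<in> M'" unfolding M'_def using span_superset by blast
    ultimately show False using ny by blast
  qed
  define f where "f x = (SOME a. (x,a) \<in> M)" for x
  have fM: "(x, f x) \<in> M" for x unfolding f_def using total[of x] by (metis someI_ex)
  have fadd: "f (x + y) = f x + f y" for x y using uniq[OF fM Madd[OF fM fM]] .
  have fscale: "f (c *\<^sub>R x) = c * f x" for c x using uniq[OF fM Mscale[OF fM]] .
  have fb: "\<bar>f x\<bar> \<le> C * norm x" for x
  proof -
    have "f x \<le> C * norm x" using Mdom[OF fM] .
    moreover have "f ((-1) *\<^sub>R x) \<le> C * norm ((-1) *\<^sub>R x)" using Mdom[OF fM] .
    then have "- f x \<le> C * norm x" using fscale[of "-1" x] by simp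
    ultimately show ?thesis by simp
  qed
  have bl: "bounded_linear f"
    by (rule bounded_linear_intro[of f C]) (use fadd fscale fb in \<open>auto simp: mult.commute\<close>)
  show ?thesis
  proof (intro exI conjI)
    show "\<forall>(x,a)\<in>G0. blinfun_apply (Blinfun f) x = a"
      using bounded_linear_Blinfun_apply[OF bl] G0M uniq fM by fastforce
    show "norm (Blinfun f) \<le> C"
      by (rule norm_blinfun_bound[OF C]) (use bounded_linear_Blinfun_apply[OF bl] fb in auto)
  qed
qed

lemma coef_bound:
  fixes V :: "'a::real_normed_vector set"
  assumes "subspace V" "v \<in> V"
  shows "\<bar>t\<bar> * infdist a V \<le> norm (v + t *\<^sub>R a)"
proof (cases "t = 0")
  case True then show ?thesis by simp
next
  case False
  have "- ((1/t) *\<^sub>R v) \<in> V" using assms by (simp add: subspace_neg subspace_scale)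
  then have "infdist a V \<le> dist a (- ((1/t) *\<^sub>R v))" by (rule infdist_le)
  also have "\<dots> = norm ((1/t) *\<^sub>R v + a)" by (simp add: dist_norm add.commute)
  finally have "\<bar>t\<bar> * infdist a V \<le> \<bar>t\<bar> * norm ((1/t) *\<^sub>R v + a)" by (simp add: mult_left_mono)
  also have "\<dots> = norm (t *\<^sub>R ((1/t) *\<^sub>R v + a))" by simp
  also have "t *\<^sub>R ((1/t) *\<^sub>R v + a) = v + t *\<^sub>R a" using False by (simp add: algebra_simps)
  finally show ?thesis .
qed

lemma closed_span_finite:
  fixes S :: "'a::real_normed_vector set"
  assumes "finite S" shows "closed (span S)"
  using assms
proof (induction S rule: finite_induct)
  case empty then show ?case by simp
next
  case (insert a S)
  show ?case
  proof (cases "a \<in> span S")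
    case True then show ?thesis using insert span_redundant by metis
  next
    case False
    define \<delta> where "\<delta> = infdist a (span S)"
    have dpos: "\<delta> > 0" unfolding \<delta>_def
      by (rule infdist_pos_not_in_closed[OF insert(3) _ False]) (use span_zero in blast)
    show ?thesis
      unfolding closed_sequential_limits
    proof (intro allI impI, elim conjE)
      fix w b assume w: "\<forall>n. w n \<in> span (insert a S)" and lim: "w \<longlonglongrightarrow> b"
      have "\<forall>n. \<exists>t. w n - t *\<^sub>R a \<in> span S" using w unfolding span_insert by blast
      then obtain t where t: "\<And>n. w n - t n *\<^sub>R a \<in> span S" by metis
      have Cw: "Cauchy w" using lim by (rule LIMSEQ_imp_Cauchy)
      have "Cauchy t"
      proof (rule metric_CauchyI)
        fix e :: real assume e: "e > 0"
        obtain M where M: "\<And>m n. m \<ge> M \<Longrightarrow> n \<ge> M \<Longrightarrow> norm (w m - w n) < e * \<delta>"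
          using CauchyD[OF Cw, of "e * \<delta>"] e dpos by auto
        show "\<exists>M. \<forall>m\<ge>M. \<forall>n\<ge>M. dist (t m) (t n) < e"
        proof (intro exI allI impI)
          fix m n assume mn: "m \<ge> M" "n \<ge> M"
          have "(w m - t m *\<^sub>R a) - (w n - t n *\<^sub>R a) \<in> span S"
            using t by (simp add: span_diff)
          from coef_bound[OF subspace_span this, of "t m - t n" a]
          have "\<bar>t m - t n\<bar> * \<delta> \<le> norm (w m - w n)" unfolding \<delta>_def by (simp add: algebra_simps)
          also have "\<dots> < e * \<delta>" using M mn by blast
          finally show "dist (t m) (t n) < e" using dpos by (simp add: dist_real_def)
        qed
      qed
      then have tl: "t \<longlonglongrightarrow> lim t" by (simp add: Cauchy_convergent_iff convergent_LIMSEQ_iff)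
      have "(\<lambda>n. w n - t n *\<^sub>R a) \<longlonglongrightarrow> b - lim t *\<^sub>R a"
        by (intro tendsto_intros lim tl)
      then have "b - lim t *\<^sub>R a \<in> span S"
        using insert(3) t unfolding closed_sequential_limits
        by (metis (no_types, lifting))
      then show "b \<in> span (insert a S)" unfolding span_insert by blast
    qed
  qed
qed

lemma fd_est:
  fixes S :: "'a::real_normed_vector set"
  assumes "finite S"
  shows "\<And>\<kappa>. \<kappa> > 0 \<Longrightarrow> \<exists>F \<eta>. finite F \<and> \<eta> > 0 \<and>
     (\<forall>h::'a \<Rightarrow>\<^sub>L real. (\<forall>b\<in>F. \<bar>blinfun_apply h b\<bar> < \<eta>) \<longrightarrow>
        (\<forall>x\<in>span S. \<bar>blinfun_apply h x\<bar> \<le> \<kappa> * norm x))"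
  using assms
proof (induction S rule: finite_induct)
  case empty then show ?case by (intro exI[of _ "{}"] exI[of _ 1]) auto
next
  case (insert a S \<kappa>)
  show ?case
  proof (cases "a \<in> span S")
    case True then show ?thesis using insert span_redundant by metis
  next
    case False
    define \<delta> where "\<delta> = infdist a (span S)"
    have dpos: "\<delta> > 0" unfolding \<delta>_def
      by (rule infdist_pos_not_in_closed[OF closed_span_finite[OF insert(1)] _ False]) (use span_zero in blast)
    define \<kappa>' where "\<kappa>' = \<kappa> / (2 * (1 + norm a / \<delta>))"
    define \<eta>' where "\<eta>' = \<kappa> * \<delta> / 2"
    have Ap: "1 + norm a / \<delta> > 0" using dpos by (simp add: add_pos_nonneg)
    have kp: "\<kappa>' > 0" unfolding \<kappa>'_def using insert(4) Ap by simp
    obtain F \<eta> where F: "finite F" "\<eta> > 0" and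
      Fh: "\<And>h::'a \<Rightarrow>\<^sub>L real. (\<forall>b\<in>F. \<bar>blinfun_apply h b\<bar> < \<eta>) \<Longrightarrow> (\<forall>x\<in>span S. \<bar>blinfun_apply h x\<bar> \<le> \<kappa>' * norm x)"
      using insert(3)[OF kp] by blast
    show ?thesis
    proof (intro exI[of _ "insert a F"] exI[of _ "min \<eta> \<eta>'"] conjI allI impI ballI)
      show "finite (insert a F)" using F by simp
      show "min \<eta> \<eta>' > 0" using F dpos insert(4) unfolding \<eta>'_def by simp
      fix h :: "'a \<Rightarrow>\<^sub>L real" and x
      assume hb: "\<forall>b\<in>insert a F. \<bar>blinfun_apply h b\<bar> < min \<eta> \<eta>'" and x: "x \<in> span (insert a S)"
      have hS: "\<forall>y\<in>span S. \<bar>blinfun_apply h y\<bar> \<le> \<kappa>' * norm y" using Fh hb by auto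
      have ha: "\<bar>blinfun_apply h a\<bar> \<le> \<eta>'" using hb by auto
      obtain t where st: "x - t *\<^sub>R a \<in> span S" using x unfolding span_insert by blast
      define s where "s = x - t *\<^sub>R a"
      have s: "s \<in> span S" using st s_def by simp
      have xs: "x = s + t *\<^sub>R a" using s_def by simp
      have tb: "\<bar>t\<bar> * \<delta> \<le> norm x" using coef_bound[OF subspace_span s, of t a] xs \<delta>_def by simp
      have tb': "\<bar>t\<bar> \<le> norm x / \<delta>" using tb dpos by (simp add: field_simps)
      have ns: "norm s \<le> norm x + \<bar>t\<bar> * norm a"
        using norm_triangle_ineq4[of x "t *\<^sub>R a"] s_def by simp
      have ns': "norm s \<le> norm x * (1 + norm a / \<delta>)"
      proof -
        have "\<bar>t\<bar> * norm a \<le> norm x / \<delta> * norm a" using tb' by (rule mult_right_mono) simp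
        then show ?thesis using ns by (simp add: algebra_simps)
      qed
      have "blinfun_apply h x = blinfun_apply h s + t * blinfun_apply h a"
        using xs by (simp add: blinfun.add_right blinfun.scaleR_right)
      then have "\<bar>blinfun_apply h x\<bar> \<le> \<bar>blinfun_apply h s\<bar> + \<bar>t\<bar> * \<bar>blinfun_apply h a\<bar>"
        by (simp add: abs_mult[symmetric] abs_triangle_ineq)
      also have "\<dots> \<le> \<kappa>' * norm s + \<bar>t\<bar> * \<eta>'"
        using hS s ha by (intro add_mono mult_left_mono) auto
      also have "\<kappa>' * norm s \<le> \<kappa>' * (norm x * (1 + norm a / \<delta>))"
        using ns' kp by (simp add: mult_left_mono)
      also have "\<kappa>' * (norm x * (1 + norm a / \<delta>)) = \<kappa> / 2 * norm x"
      proof -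
        obtain A where A: "A = 1 + norm a / \<delta>" by blast
        have "A \<noteq> 0" using Ap A by simp
        then have "\<kappa> / (2 * A) * (norm x * A) = \<kappa> / 2 * norm x" by (simp add: field_simps)
        then show ?thesis unfolding \<kappa>'_def A by simp
      qed
      also have "\<bar>t\<bar> * \<eta>' \<le> norm x / \<delta> * \<eta>'"
        using tb' dpos insert(4) unfolding \<eta>'_def by (intro mult_right_mono) auto
      also have "norm x / \<delta> * \<eta>' = \<kappa> / 2 * norm x"
        unfolding \<eta>'_def using dpos by (simp add: field_simps)
      finally show "\<bar>blinfun_apply h x\<bar> \<le> \<kappa> * norm x" by simp
    qed
  qed
qed

lemma norm_attain:
  fixes h :: "'a::real_normed_vector \<Rightarrow>\<^sub>L real"
  assumes r: "r \<ge> 0" and hr: "norm h > r"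
  shows "\<exists>y. norm y = 1 \<and> blinfun_apply h y > r"
proof (rule ccontr)
  assume "\<not> ?thesis"
  then have H: "\<And>y. norm y = 1 \<Longrightarrow> blinfun_apply h y \<le> r" by force
  have "norm (blinfun_apply h x) \<le> r * norm x" for x
  proof (cases "x = 0")
    case True then show ?thesis by simp
  next
    case False
    define y where "y = (1 / norm x) *\<^sub>R x"
    have ny: "norm y = 1" "norm (-y) = 1" using False unfolding y_def by auto
    have xy: "x = norm x *\<^sub>R y" using False unfolding y_def by simp
    have "blinfun_apply h x = norm x * blinfun_apply h y"
      by (subst xy) (simp add: blinfun.scaleR_right)
    moreover have "blinfun_apply h y \<le> r" "- blinfun_apply h y \<le> r"
      using H[OF ny(1)] H[OF ny(2)] by (auto simp: blinfun.minus_right)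
    ultimately have "\<bar>blinfun_apply h y\<bar> \<le> r" "blinfun_apply h x = norm x * blinfun_apply h y" by auto
    then show ?thesis
      using mult_left_mono[of "\<bar>blinfun_apply h y\<bar>" r "norm x"] by (simp add: abs_mult mult.commute)
  qed
  then have "norm h \<le> r" by (rule norm_blinfun_bound[OF r])
  then show False using hr by simp
qed

lemma graph_subspace:
  fixes h :: "'a::real_normed_vector \<Rightarrow>\<^sub>L real"
  assumes "subspace E"
  shows "subspace ((\<lambda>x. (x, blinfun_apply h x)) ` E)"
  unfolding subspace_def
proof (intro conjI ballI allI)
  show "0 \<in> (\<lambda>x. (x, blinfun_apply h x)) ` E"
    using subspace_0[OF assms] by (force simp: zero_prod_def)
next
  fix p q assume "p \<in> (\<lambda>x. (x, blinfun_apply h x)) ` E" "q \<in> (\<lambda>x. (x, blinfun_apply h x)) ` E"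
  then obtain x y where "x \<in> E" "y \<in> E" "p = (x, h x)" "q = (y, h y)" by auto
  then show "p + q \<in> (\<lambda>x. (x, blinfun_apply h x)) ` E"
    using subspace_add[OF assms] by (force simp: blinfun.add_right)
next
  fix c p assume "p \<in> (\<lambda>x. (x, blinfun_apply h x)) ` E"
  then obtain x where "x \<in> E" "p = (x, h x)" by auto
  then show "c *\<^sub>R p \<in> (\<lambda>x. (x, blinfun_apply h x)) ` E"
    using subspace_scale[OF assms] by (force simp: blinfun.scaleR_right)
qed

lemma HB_sub:
  fixes h :: "'a::real_normed_vector \<Rightarrow>\<^sub>L real"
  assumes E: "subspace E" and C: "C \<ge> 0" and b: "\<And>x. x \<in> E \<Longrightarrow> \<bar>blinfun_apply h x\<bar> \<le> C * norm x"
  shows "\<exists>k::'a \<Rightarrow>\<^sub>L real. (\<forall>x\<in>E. blinfun_apply k x = blinfun_apply h x) \<and> norm k \<le> C"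
proof -
  have "\<exists>k::'a \<Rightarrow>\<^sub>L real. (\<forall>(x,a)\<in>(\<lambda>x. (x, blinfun_apply h x)) ` E. blinfun_apply k x = a) \<and> norm k \<le> C"
    by (rule HB_ext[OF graph_subspace[OF E] C]) (use b in force)
  then show ?thesis by auto
qed

lemma blinfun_abs_le: "\<bar>blinfun_apply (f::'a::real_normed_vector \<Rightarrow>\<^sub>L real) x\<bar> \<le> norm f * norm x"
  using norm_blinfun[of f x] by simp

definition P3 :: "'a::real_normed_vector itself \<Rightarrow> bool" where
  "P3 _ \<longleftrightarrow> (\<forall>(E::'a set) (xs::'a \<Rightarrow>\<^sub>L real) (e::real) (e0::real).
           finite_dim_subspace E \<longrightarrow> norm xs \<le> 1 \<longrightarrow> e > 0 \<longrightarrow> 0 < e0 \<longrightarrow> e0 < e \<longrightarrow>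
           (\<exists>y::'a. norm y = 1 \<and>
              (\<forall>\<gamma>::real. \<bar>\<gamma>\<bar> \<le> 1 + e0 \<longrightarrow>
                 (\<exists>ys::'a \<Rightarrow>\<^sub>L real. (\<forall>x\<in>E. blinfun_apply ys x = blinfun_apply xs x)
                    \<and> blinfun_apply ys y = \<gamma> \<and> norm ys \<le> 1 + e))))"

definition P3' :: "'a::real_normed_vector itself \<Rightarrow> bool" where
  "P3' _ \<longleftrightarrow> (\<forall>(E::'a set) (xs::'a \<Rightarrow>\<^sub>L real) (e::real).
           finite_dim_subspace E \<longrightarrow> norm xs \<le> 1 \<longrightarrow> e > 0 \<longrightarrow>
           (\<exists>(y::'a) (x1::'a \<Rightarrow>\<^sub>L real) (x2::'a \<Rightarrow>\<^sub>L real). norm y = 1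
              \<and> (\<forall>x\<in>E. blinfun_apply x1 x = blinfun_apply xs x)
              \<and> (\<forall>x\<in>E. blinfun_apply x2 x = blinfun_apply xs x)
              \<and> blinfun_apply x1 y - blinfun_apply x2 y > 2 - e
              \<and> norm x1 \<le> 1 + e \<and> norm x2 \<le> 1 + e))"

lemma ii_iii:
  fixes X :: "'a::real_normed_vector itself"
  assumes WO: "weakly_octahedral X" shows "P3 X"
  unfolding P3_def
proof (intro allI impI)
  fix E :: "'a set" and xs :: "'a \<Rightarrow>\<^sub>L real" and e e0 :: real
  assume fd: "finite_dim_subspace E" and nxs: "norm xs \<le> 1" and e: "e > 0" and e0: "0 < e0" "e0 < e"
  have Esub: "subspace E" using fd unfolding finite_dim_subspace_def by simp
  define \<delta> where "\<delta> = (e - e0) / (1 + e)"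
  have dpos: "\<delta> > 0" using e e0 unfolding \<delta>_def by simp
  have d1: "\<delta> < 1" using e e0 unfolding \<delta>_def by (simp add: field_simps)
  have drel: "(1 - \<delta>) * (1 + e) = 1 + e0" using e unfolding \<delta>_def by (simp add: field_simps)
  obtain y where ny: "norm y = 1" and
    yo: "\<And>x. x \<in> E \<Longrightarrow> norm (x + y) \<ge> (1 - \<delta>) * (\<bar>blinfun_apply xs x\<bar> + norm y)"
    using WO fd nxs dpos unfolding weakly_octahedral_def by blast
  show "\<exists>y::'a. norm y = 1 \<and>
              (\<forall>\<gamma>::real. \<bar>\<gamma>\<bar> \<le> 1 + e0 \<longrightarrow>
                 (\<exists>ys::'a \<Rightarrow>\<^sub>L real. (\<forall>x\<in>E. blinfun_apply ys x = blinfun_apply xs x)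
                    \<and> blinfun_apply ys y = \<gamma> \<and> norm ys \<le> 1 + e))"
  proof (intro exI[of _ y] conjI allI impI)
    show "norm y = 1" by (rule ny)
    fix \<gamma> :: real assume g: "\<bar>\<gamma>\<bar> \<le> 1 + e0"
    have key: "\<bar>blinfun_apply xs v + \<gamma>\<bar> \<le> (1 + e) * norm (v + y)" if v: "v \<in> E" for v
    proof -
      have "\<bar>blinfun_apply xs v + \<gamma>\<bar> \<le> \<bar>blinfun_apply xs v\<bar> + (1 + e0)"
        using g abs_triangle_ineq[of "blinfun_apply xs v" \<gamma>] by linarith
      also have "\<dots> \<le> (1 + e0) * (\<bar>blinfun_apply xs v\<bar> + 1)"
        using e0 by (simp add: algebra_simps)
      also have "\<dots> = (1 + e) * ((1 - \<delta>) * (\<bar>blinfun_apply xs v\<bar> + norm y))"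
      proof -
        have "(1 + e) * ((1 - \<delta>) * (\<bar>blinfun_apply xs v\<bar> + norm y))
            = ((1 - \<delta>) * (1 + e)) * (\<bar>blinfun_apply xs v\<bar> + 1)" using ny by (simp add: algebra_simps)
        then show ?thesis using drel by simp
      qed
      also have "\<dots> \<le> (1 + e) * norm (v + y)"
        using yo[OF v] e by (intro mult_left_mono) auto
      finally show ?thesis .
    qed
    define G1 where "G1 = (\<lambda>x. (x, blinfun_apply xs x)) ` E"
    have G1sub: "subspace G1" unfolding G1_def by (rule graph_subspace[OF Esub])
    define G0 where "G0 = span (insert (y, \<gamma>) G1)"
    have "\<exists>f::'a \<Rightarrow>\<^sub>L real. (\<forall>(x,a)\<in>G0. blinfun_apply f x = a) \<and> norm f \<le> 1 + e"
    proof (rule HB_ext)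
      show "subspace G0" unfolding G0_def by (rule subspace_span)
      show "0 \<le> 1 + e" using e by simp
      fix z a assume "(z, a) \<in> G0"
      then obtain k where k: "(z, a) - k *\<^sub>R (y, \<gamma>) \<in> G1"
        unfolding G0_def span_insert using span_eq_iff[THEN iffD2, OF G1sub] by auto
      then obtain u where u: "u \<in> E" "z - k *\<^sub>R y = u" "a - k * \<gamma> = blinfun_apply xs u"
        unfolding G1_def by auto
      have za: "z = u + k *\<^sub>R y" "a = blinfun_apply xs u + k * \<gamma>" using u by auto
      show "a \<le> (1 + e) * norm z"
      proof (cases "k = 0")
        case True
        have "a \<le> \<bar>blinfun_apply xs u\<bar>" using za True by simp
        also have "\<dots> \<le> norm xs * norm u" by (rule blinfun_abs_le)
        also have "\<dots> \<le> 1 * norm u" using nxs by (intro mult_right_mono) auto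
        also have "\<dots> \<le> (1 + e) * norm u" using e by (intro mult_right_mono) auto
        finally show ?thesis using za True by simp
      next
        case False
        define v where "v = (1 / k) *\<^sub>R u"
        have vE: "v \<in> E" unfolding v_def using subspace_scale[OF Esub u(1)] .
        have uv: "u = k *\<^sub>R v" using False unfolding v_def by simp
        have "a = k * (blinfun_apply xs v + \<gamma>)"
          using za uv by (simp add: blinfun.scaleR_right algebra_simps)
        also have "\<dots> \<le> \<bar>k\<bar> * \<bar>blinfun_apply xs v + \<gamma>\<bar>" by (simp add: abs_mult[symmetric])
        also have "\<dots> \<le> \<bar>k\<bar> * ((1 + e) * norm (v + y))" using key[OF vE] by (intro mult_left_mono) auto
        also have "\<dots> = (1 + e) * norm (k *\<^sub>R (v + y))" by simp
        also have "k *\<^sub>R (v + y) = z" using za uv by (simp add: algebra_simps)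
        finally show ?thesis .
      qed
    qed
    then obtain f :: "'a \<Rightarrow>\<^sub>L real" where f: "\<forall>(x,a)\<in>G0. blinfun_apply f x = a" "norm f \<le> 1 + e" by blast
    have "G1 \<subseteq> G0" "(y, \<gamma>) \<in> G0" unfolding G0_def using span_superset[of "insert (y, \<gamma>) G1"] by auto
    then have "\<forall>x\<in>E. blinfun_apply f x = blinfun_apply xs x" "blinfun_apply f y = \<gamma>"
      using f(1) unfolding G1_def by auto
    then show "\<exists>ys::'a \<Rightarrow>\<^sub>L real. (\<forall>x\<in>E. blinfun_apply ys x = blinfun_apply xs x)
                    \<and> blinfun_apply ys y = \<gamma> \<and> norm ys \<le> 1 + e" using f(2) by blast
  qed
qed

lemma iii_iii':
  fixes X :: "'a::real_normed_vector itself"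
  assumes "P3 X" shows "P3' X"
  unfolding P3'_def
proof (intro allI impI)
  fix E :: "'a set" and xs :: "'a \<Rightarrow>\<^sub>L real" and e :: real
  assume fd: "finite_dim_subspace E" and nxs: "norm xs \<le> 1" and e: "e > 0"
  obtain y where ny: "norm y = 1" and
    H: "\<And>\<gamma>. \<bar>\<gamma>\<bar> \<le> 1 + e/2 \<Longrightarrow> \<exists>ys::'a \<Rightarrow>\<^sub>L real. (\<forall>x\<in>E. blinfun_apply ys x = blinfun_apply xs x)
                    \<and> blinfun_apply ys y = \<gamma> \<and> norm ys \<le> 1 + e"
    using assms fd nxs e unfolding P3_def
    by (metis (no_types, lifting) half_gt_zero less_add_same_cancel1 field_sum_of_halves)
  obtain x1 where x1: "\<forall>x\<in>E. blinfun_apply x1 x = blinfun_apply xs x" "blinfun_apply x1 y = 1" "norm x1 \<le> 1 + e"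
    using H[of 1] e by auto
  obtain x2 where x2: "\<forall>x\<in>E. blinfun_apply x2 x = blinfun_apply xs x" "blinfun_apply x2 y = -1" "norm x2 \<le> 1 + e"
    using H[of "-1"] e by auto
  show "\<exists>(y::'a) (x1::'a \<Rightarrow>\<^sub>L real) (x2::'a \<Rightarrow>\<^sub>L real). norm y = 1
              \<and> (\<forall>x\<in>E. blinfun_apply x1 x = blinfun_apply xs x)
              \<and> (\<forall>x\<in>E. blinfun_apply x2 x = blinfun_apply xs x)
              \<and> blinfun_apply x1 y - blinfun_apply x2 y > 2 - e
              \<and> norm x1 \<le> 1 + e \<and> norm x2 \<le> 1 + e"
    using ny x1 x2 e by (intro exI[of _ y] exI[of _ x1] exI[of _ x2]) auto
qed

lemma iii'_ii:
  fixes X :: "'a::real_normed_vector itself"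
  assumes "P3' X" shows "weakly_octahedral X"
  unfolding weakly_octahedral_def
proof (intro allI impI)
  fix E :: "'a set" and xs :: "'a \<Rightarrow>\<^sub>L real" and e :: real
  assume fd: "finite_dim_subspace E" and nxs: "norm xs \<le> 1" and e: "e > 0"
  define \<delta> where "\<delta> = e / 3"
  have dpos: "\<delta> > 0" using e unfolding \<delta>_def by simp
  obtain y x1 x2 where ny: "norm y = 1" and
    x1: "\<forall>x\<in>E. blinfun_apply x1 x = blinfun_apply xs x" and
    x2: "\<forall>x\<in>E. blinfun_apply x2 x = blinfun_apply xs x" and
    d: "blinfun_apply x1 y - blinfun_apply x2 y > 2 - \<delta>" and
    n1: "norm x1 \<le> 1 + \<delta>" and n2: "norm x2 \<le> 1 + \<delta>"
    using assms fd nxs dpos unfolding P3'_def by blast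
  have b1: "\<bar>blinfun_apply x1 v\<bar> \<le> (1 + \<delta>) * norm v" for v
    using blinfun_abs_le[of x1 v] n1 by (meson mult_right_mono norm_ge_zero order_trans)
  have b2: "\<bar>blinfun_apply x2 v\<bar> \<le> (1 + \<delta>) * norm v" for v
    using blinfun_abs_le[of x2 v] n2 by (meson mult_right_mono norm_ge_zero order_trans)
  have y1: "blinfun_apply x1 y > 1 - 2 * \<delta>" using d b2[of y] ny by (simp add: abs_le_iff)
  have y2: "blinfun_apply x2 y < - 1 + 2 * \<delta>" using d b1[of y] ny by (simp add: abs_le_iff)
  show "\<exists>y. norm y = 1 \<and> (\<forall>x\<in>E. norm (x + y) \<ge> (1 - e) * (\<bar>blinfun_apply xs x\<bar> + norm y))"
  proof (intro exI[of _ y] conjI ballI)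
    show "norm y = 1" by (rule ny)
    fix x assume xE: "x \<in> E"
    define A where "A = \<bar>blinfun_apply xs x\<bar> + 1"
    have A1: "A \<ge> 1" unfolding A_def by simp
    have main: "A - 2 * \<delta> \<le> (1 + \<delta>) * norm (x + y)"
    proof (cases "blinfun_apply xs x \<ge> 0")
      case True
      have "A - 2 * \<delta> \<le> blinfun_apply x1 (x + y)"
        using True y1 x1 xE unfolding A_def by (simp add: blinfun.add_right)
      also have "\<dots> \<le> (1 + \<delta>) * norm (x + y)" using b1[of "x + y"] by simp
      finally show ?thesis .
    next
      case False
      have "A - 2 * \<delta> \<le> - blinfun_apply x2 (x + y)"
        using False y2 x2 xE unfolding A_def by (simp add: blinfun.add_right)
      also have "\<dots> \<le> (1 + \<delta>) * norm (x + y)" using b2[of "x + y"] by simp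
      finally show ?thesis .
    qed
    have "(1 + \<delta>) * ((1 - e) * A) = A - 2 * \<delta> * A - 3 * \<delta>\<^sup>2 * A"
    proof -
      have e3: "e = 3 * \<delta>" unfolding \<delta>_def by simp
      show ?thesis by (simp add: e3 algebra_simps power2_eq_square)
    qed
    also have "\<dots> \<le> A - 2 * \<delta>"
    proof -
      have "2 * \<delta> * A \<ge> 2 * \<delta>" using A1 dpos by simp
      moreover have "3 * \<delta>\<^sup>2 * A \<ge> 0" using A1 by simp
      ultimately show ?thesis by linarith
    qed
    also have "\<dots> \<le> (1 + \<delta>) * norm (x + y)" by (rule main)
    finally have "(1 - e) * A \<le> norm (x + y)" using dpos
      by (simp add: mult_le_cancel_left_pos)
    then show "norm (x + y) \<ge> (1 - e) * (\<bar>blinfun_apply xs x\<bar> + norm y)"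
      using ny unfolding A_def by simp
  qed
qed
lemma iii'_i:
  fixes X :: "'a::real_normed_vector itself"
  assumes P: "P3' X" shows "weak_star_diameter_two X"
  unfolding weak_star_diameter_two_def
proof (intro allI impI)
  fix U :: "('a \<Rightarrow>\<^sub>L real) set"
  assume wo: "weak_star_open U" and ne: "U \<inter> {f. norm f \<le> 1} \<noteq> {}"
  define S where "S = U \<inter> {f::'a \<Rightarrow>\<^sub>L real. norm f \<le> 1}"
  have bS: "bounded S"
    by (rule bounded_subset[OF bounded_cball[of 0 1]]) (auto simp: S_def)
  have le: "diameter S \<le> 2"
  proof (rule diameter_le)
    show "S \<noteq> {} \<or> 0 \<le> (2::real)" by simp
    fix f g assume "f \<in> S" "g \<in> S"
    then have "norm f \<le> 1" "norm g \<le> 1" unfolding S_def by auto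
    then show "norm (f - g) \<le> 2" using norm_triangle_ineq4[of f g] by simp
  qed
  have ge: "\<not> diameter S < 2"
  proof
    assume dl: "diameter S < 2"
    define \<eta> where "\<eta> = 2 - diameter S"
    have etap: "\<eta> > 0" using dl unfolding \<eta>_def by simp
    obtain f0 where f0: "f0 \<in> U" "norm f0 \<le> 1" using ne by auto
    obtain F e where F: "finite F" "e > 0"
      and FU: "{g. \<forall>x\<in>F. \<bar>blinfun_apply g x - blinfun_apply f0 x\<bar> < e} \<subseteq> U"
      using wo f0(1) unfolding weak_star_open_def by blast
    define M where "M = sum norm F"
    have M0: "M \<ge> 0" unfolding M_def by (simp add: sum_nonneg)
    define \<delta> where "\<delta> = min (\<eta> / 4) (e / (M + 1))"
    have dpos: "\<delta> > 0" unfolding \<delta>_def using etap F M0 by simp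
    have d4: "4 * \<delta> \<le> \<eta>" unfolding \<delta>_def by simp
    have dM: "\<delta> * (M + 1) \<le> e" unfolding \<delta>_def using M0
      by (metis add_nonneg_pos le_divide_eq min.cobounded2 mult.commute zero_less_one)
    define E where "E = span F"
    have fd: "finite_dim_subspace E" unfolding finite_dim_subspace_def E_def using F by auto
    obtain y x1 x2 where ny: "norm y = 1" and
      x1: "\<forall>x\<in>E. blinfun_apply x1 x = blinfun_apply f0 x" and
      x2: "\<forall>x\<in>E. blinfun_apply x2 x = blinfun_apply f0 x" and
      d: "blinfun_apply x1 y - blinfun_apply x2 y > 2 - \<delta>" and
      n1: "norm x1 \<le> 1 + \<delta>" and n2: "norm x2 \<le> 1 + \<delta>"
      using P fd f0(2) dpos unfolding P3'_def by blast
    define g1 where "g1 = (1 / (1 + \<delta>)) *\<^sub>R x1"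
    define g2 where "g2 = (1 / (1 + \<delta>)) *\<^sub>R x2"
    have inS: "(1 / (1 + \<delta>)) *\<^sub>R xi \<in> S"
      if xi: "\<forall>x\<in>E. blinfun_apply xi x = blinfun_apply f0 x" "norm xi \<le> 1 + \<delta>" for xi
    proof -
      have "\<bar>blinfun_apply ((1 / (1 + \<delta>)) *\<^sub>R xi) b - blinfun_apply f0 b\<bar> < e" if b: "b \<in> F" for b
      proof -
        have bE: "b \<in> E" unfolding E_def using b span_superset by blast
        have "blinfun_apply ((1 / (1 + \<delta>)) *\<^sub>R xi) b - blinfun_apply f0 b
            = - (\<delta> / (1 + \<delta>)) * blinfun_apply f0 b"
          using xi(1) bE dpos by (simp add: blinfun.scaleR_left field_simps)
        then have "\<bar>blinfun_apply ((1 / (1 + \<delta>)) *\<^sub>R xi) b - blinfun_apply f0 b\<bar>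
            = (\<delta> / (1 + \<delta>)) * \<bar>blinfun_apply f0 b\<bar>" using dpos by (simp add: abs_mult)
        also have "\<dots> \<le> \<delta> * \<bar>blinfun_apply f0 b\<bar>"
          using dpos by (intro mult_right_mono) (auto simp: field_simps)
        also have "\<bar>blinfun_apply f0 b\<bar> \<le> norm b"
          using blinfun_abs_le[of f0 b] f0(2) by (meson mult_left_le_one_le norm_ge_zero norm_not_less_zero order_trans)
        also have "norm b \<le> M" unfolding M_def using b F(1) by (intro member_le_sum) auto
        finally have "\<bar>blinfun_apply ((1 / (1 + \<delta>)) *\<^sub>R xi) b - blinfun_apply f0 b\<bar> \<le> \<delta> * M"
          using dpos by (simp add: mult_left_mono)
        also have "\<delta> * M < e" using dM dpos by (simp add: algebra_simps)
        finally show ?thesis .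
      qed
      then have "(1 / (1 + \<delta>)) *\<^sub>R xi \<in> U" using FU by blast
      moreover have "norm ((1 / (1 + \<delta>)) *\<^sub>R xi) \<le> 1" using xi(2) dpos by simp
      ultimately show ?thesis unfolding S_def by simp
    qed
    have g1S: "g1 \<in> S" unfolding g1_def using inS x1 n1 by blast
    have g2S: "g2 \<in> S" unfolding g2_def using inS x2 n2 by blast
    have "dist g1 g2 \<le> diameter S" by (rule diameter_bounded_bound[OF bS g1S g2S])
    moreover have "dist g1 g2 > diameter S"
    proof -
      have "blinfun_apply (g1 - g2) y = (blinfun_apply x1 y - blinfun_apply x2 y) / (1 + \<delta>)"
        unfolding g1_def g2_def by (simp add: blinfun.diff_left blinfun.scaleR_left diff_divide_distrib)
      also have "\<dots> > (2 - \<delta>) / (1 + \<delta>)" using d dpos by (simp add: divide_strict_right_mono)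
      finally have a: "blinfun_apply (g1 - g2) y > (2 - \<delta>) / (1 + \<delta>)" .
      have "2 - 4 * \<delta> \<le> (2 - \<delta>) / (1 + \<delta>)"
        using dpos by (simp add: field_simps algebra_simps)
      moreover have "blinfun_apply (g1 - g2) y \<le> norm (g1 - g2)"
        using blinfun_abs_le[of "g1 - g2" y] ny by simp
      ultimately have "norm (g1 - g2) > 2 - 4 * \<delta>" using a by linarith
      then show ?thesis using d4 unfolding \<eta>_def dist_norm by linarith
    qed
    ultimately show False by linarith
  qed
  show "diameter (U \<inter> {f. norm f \<le> 1}) = 2" using le ge unfolding S_def by linarith
qed

lemma basic_open:
  fixes xs :: "'a::real_normed_vector \<Rightarrow>\<^sub>L real"
  assumes F: "finite F"
  shows "weak_star_open {g. \<forall>b\<in>F. \<bar>blinfun_apply g b - blinfun_apply xs b\<bar> < \<eta>}"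
  unfolding weak_star_open_def
proof (intro ballI)
  fix f assume f: "f \<in> {g. \<forall>b\<in>F. \<bar>blinfun_apply g b - blinfun_apply xs b\<bar> < \<eta>}"
  define T where "T = insert \<eta> ((\<lambda>b. \<eta> - \<bar>blinfun_apply f b - blinfun_apply xs b\<bar>) ` F)"
  have Tfin: "finite T" "T \<noteq> {}" unfolding T_def using F by auto
  have etap: "\<eta> > 0" if "F \<noteq> {}"
    using f that by (metis (no_types, lifting) abs_ge_zero all_not_in_conv mem_Collect_eq order_le_less_trans)
  have Tpos: "\<forall>t\<in>T. 0 < t \<or> F = {}" unfolding T_def using f etap by auto
  show "\<exists>F' e. finite F' \<and> e > 0 \<and> {g. \<forall>x\<in>F'. \<bar>blinfun_apply g x - blinfun_apply f x\<bar> < e}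
           \<subseteq> {g. \<forall>b\<in>F. \<bar>blinfun_apply g b - blinfun_apply xs b\<bar> < \<eta>}"
  proof (cases "F = {}")
    case True then show ?thesis by (intro exI[of _ "{}"] exI[of _ 1]) auto
  next
    case False
    have Mp: "Min T > 0" using Tfin Tpos False by (simp add: Min_gr_iff)
    show ?thesis
    proof (intro exI[of _ F] exI[of _ "Min T"] conjI subsetI)
      show "finite F" by (rule F)
      show "Min T > 0" by (rule Mp)
      fix g assume g: "g \<in> {g. \<forall>x\<in>F. \<bar>blinfun_apply g x - blinfun_apply f x\<bar> < Min T}"
      show "g \<in> {g. \<forall>b\<in>F. \<bar>blinfun_apply g b - blinfun_apply xs b\<bar> < \<eta>}"
      proof (intro CollectI ballI)
        fix b assume b: "b \<in> F"
        have "Min T \<le> \<eta> - \<bar>blinfun_apply f b - blinfun_apply xs b\<bar>"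
          using Tfin b unfolding T_def by (intro Min_le) auto
        moreover have "\<bar>blinfun_apply g b - blinfun_apply f b\<bar> < Min T" using g b by blast
        ultimately show "\<bar>blinfun_apply g b - blinfun_apply xs b\<bar> < \<eta>" by linarith
      qed
    qed
  qed
qed

lemma i_iii':
  fixes X :: "'a::real_normed_vector itself"
  assumes D: "weak_star_diameter_two X" shows "P3' X"
  unfolding P3'_def
proof (intro allI impI)
  fix E :: "'a set" and xs :: "'a \<Rightarrow>\<^sub>L real" and e :: real
  assume fd: "finite_dim_subspace E" and nxs: "norm xs \<le> 1" and e: "e > 0"
  have Esub: "subspace E" using fd unfolding finite_dim_subspace_def by simp
  obtain F0 where F0: "finite F0" "span F0 = E" using fd unfolding finite_dim_subspace_def by blast
  define \<kappa> where "\<kappa> = e / 4"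
  have kp: "\<kappa> > 0" using e unfolding \<kappa>_def by simp
  obtain F \<eta> where F: "finite F" "\<eta> > 0" and
    Fh: "\<And>h::'a \<Rightarrow>\<^sub>L real. (\<forall>b\<in>F. \<bar>blinfun_apply h b\<bar> < \<eta>) \<Longrightarrow> (\<forall>x\<in>span F0. \<bar>blinfun_apply h x\<bar> \<le> \<kappa> * norm x)"
    using fd_est[OF F0(1) kp] by blast
  define U where "U = {g. \<forall>b\<in>F. \<bar>blinfun_apply g b - blinfun_apply xs b\<bar> < \<eta>}"
  define S where "S = U \<inter> {f::'a \<Rightarrow>\<^sub>L real. norm f \<le> 1}"
  have Uo: "weak_star_open U" unfolding U_def by (rule basic_open[OF F(1)])
  have xsS: "xs \<in> S" unfolding S_def U_def using nxs F(2) by simp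
  have dS: "diameter S = 2" using D Uo xsS unfolding weak_star_diameter_two_def S_def by blast
  define \<theta> where "\<theta> = min (e / 2) 1"
  have th: "\<theta> > 0" "\<theta> \<le> e / 2" "\<theta> \<le> 1" unfolding \<theta>_def using e by auto
  obtain g1 g2 where g: "g1 \<in> S" "g2 \<in> S" "norm (g1 - g2) > 2 - \<theta>"
  proof (rule ccontr)
    assume "\<not> thesis"
    then have "\<And>f g. f \<in> S \<Longrightarrow> g \<in> S \<Longrightarrow> norm (f - g) \<le> 2 - \<theta>" using that by force
    then have "diameter S \<le> 2 - \<theta>" using xsS by (intro diameter_le) auto
    then show False using dS th by simp
  qed
  obtain y where ny: "norm y = 1" and gy: "blinfun_apply (g1 - g2) y > 2 - \<theta>"
    using norm_attain[OF _ g(3)] th by auto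
  have ext: "\<exists>k::'a \<Rightarrow>\<^sub>L real. (\<forall>x\<in>E. blinfun_apply k x = blinfun_apply (xs - gi) x) \<and> norm k \<le> \<kappa>"
    if gi: "gi \<in> S" for gi
  proof (rule HB_sub[OF Esub])
    show "0 \<le> \<kappa>" using kp by simp
    have "\<forall>b\<in>F. \<bar>blinfun_apply (xs - gi) b\<bar> < \<eta>"
      using gi unfolding S_def U_def by (simp add: blinfun.diff_left abs_minus_commute)
    then show "\<And>x. x \<in> E \<Longrightarrow> \<bar>blinfun_apply (xs - gi) x\<bar> \<le> \<kappa> * norm x" using Fh F0(2) by blast
  qed
  obtain k1 where k1: "\<forall>x\<in>E. blinfun_apply k1 x = blinfun_apply (xs - g1) x" "norm k1 \<le> \<kappa>"
    using ext[OF g(1)] by blast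
  obtain k2 where k2: "\<forall>x\<in>E. blinfun_apply k2 x = blinfun_apply (xs - g2) x" "norm k2 \<le> \<kappa>"
    using ext[OF g(2)] by blast
  have ng1: "norm g1 \<le> 1" "norm g2 \<le> 1" using g unfolding S_def by auto
  have ky: "\<bar>blinfun_apply k1 y\<bar> \<le> \<kappa>" "\<bar>blinfun_apply k2 y\<bar> \<le> \<kappa>"
    using blinfun_abs_le[of k1 y] blinfun_abs_le[of k2 y] ny k1(2) k2(2) by auto
  show "\<exists>(y::'a) (x1::'a \<Rightarrow>\<^sub>L real) (x2::'a \<Rightarrow>\<^sub>L real). norm y = 1
              \<and> (\<forall>x\<in>E. blinfun_apply x1 x = blinfun_apply xs x)
              \<and> (\<forall>x\<in>E. blinfun_apply x2 x = blinfun_apply xs x)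
              \<and> blinfun_apply x1 y - blinfun_apply x2 y > 2 - e
              \<and> norm x1 \<le> 1 + e \<and> norm x2 \<le> 1 + e"
  proof -
    have A: "\<forall>x\<in>E. blinfun_apply (g1 + k1) x = blinfun_apply xs x"
      using k1(1) by (simp add: blinfun.add_left blinfun.diff_left)
    have B: "\<forall>x\<in>E. blinfun_apply (g2 + k2) x = blinfun_apply xs x"
      using k2(1) by (simp add: blinfun.add_left blinfun.diff_left)
    have C: "blinfun_apply (g1 + k1) y - blinfun_apply (g2 + k2) y > 2 - e"
      using gy ky th unfolding \<kappa>_def by (simp add: blinfun.add_left blinfun.diff_left abs_le_iff)
    have D1: "norm (g1 + k1) \<le> 1 + e"
      using norm_triangle_ineq[of g1 k1] ng1 k1(2) unfolding \<kappa>_def using e by linarith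
    have D2: "norm (g2 + k2) \<le> 1 + e"
      using norm_triangle_ineq[of g2 k2] ng1 k2(2) unfolding \<kappa>_def using e by linarith
    show ?thesis using ny A B C D1 D2 by blast
  qed
qed

theorem theorem3p3:
  fixes X :: "'a::banach itself"
  assumes nontrivial: "\<exists>x::'a. x \<noteq> 0"
  shows "(weak_star_diameter_two X \<longleftrightarrow> weakly_octahedral X)
    \<and> (weakly_octahedral X \<longleftrightarrow>
        (\<forall>(E::'a set) (xs::'a \<Rightarrow>\<^sub>L real) (e::real) (e0::real).
           finite_dim_subspace E \<longrightarrow> norm xs \<le> 1 \<longrightarrow> e > 0 \<longrightarrow> 0 < e0 \<longrightarrow> e0 < e \<longrightarrow>
           (\<exists>y::'a. norm y = 1 \<and>
              (\<forall>\<gamma>::real. \<bar>\<gamma>\<bar> \<le> 1 + e0 \<longrightarrow>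
                 (\<exists>ys::'a \<Rightarrow>\<^sub>L real. (\<forall>x\<in>E. blinfun_apply ys x = blinfun_apply xs x)
                    \<and> blinfun_apply ys y = \<gamma> \<and> norm ys \<le> 1 + e)))))
    \<and> (weakly_octahedral X \<longleftrightarrow>
        (\<forall>(E::'a set) (xs::'a \<Rightarrow>\<^sub>L real) (e::real).
           finite_dim_subspace E \<longrightarrow> norm xs \<le> 1 \<longrightarrow> e > 0 \<longrightarrow>
           (\<exists>(y::'a) (x1::'a \<Rightarrow>\<^sub>L real) (x2::'a \<Rightarrow>\<^sub>L real). norm y = 1
              \<and> (\<forall>x\<in>E. blinfun_apply x1 x = blinfun_apply xs x)
              \<and> (\<forall>x\<in>E. blinfun_apply x2 x = blinfun_apply xs x)
              \<and> blinfun_apply x1 y - blinfun_apply x2 y > 2 - e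
              \<and> norm x1 \<le> 1 + e \<and> norm x2 \<le> 1 + e)))"
proof -
  have a: "weak_star_diameter_two X \<longleftrightarrow> weakly_octahedral X"
    using i_iii' iii'_ii ii_iii iii_iii' iii'_i by metis
  have b: "weakly_octahedral X \<longleftrightarrow> P3 X" using ii_iii iii_iii' iii'_ii by metis
  have c: "weakly_octahedral X \<longleftrightarrow> P3' X" using ii_iii iii_iii' iii'_ii by metis
  show ?thesis using a b c unfolding P3_def P3'_def by blast
qed
end
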